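(* Let $\alpha\in\mathbb Z^n$ and let $\mathcal S\subseteq\mathbb R^n$ be a convex set such that $\mathrm{conv}(\mathcal S\cap\mathbb Z^n)$ is the nonempty polyhedron $\mathcal P=\{x\in\mathbb R^n: Ax\le b\}$ with $A\in\mathbb Z^{m\times n}$ (rows $a_1^T,\dots,a_m^T$) and $b\in\mathbb R^m$. Assume $\mathrm{rec.cone}(\mathcal S)=\{x: Ax\le 0\}$ and $\inf\{\alpha^Tx: x\in\mathcal S\}>-\infty$. Define $b'_i=\sup\{a_i^Tx: x\in\mathcal S\}$ for $i=1,\dots,m$ and assume every $b'_i$ is finite. Then $$\inf\{\alpha^Tx:x\in\mathcal S\cap\mathbb Z^n\}-\inf\{\alpha^Tx:x\in\mathcal S\}\le n\|\alpha\|_1\Delta\,(1+\|b-b'\|_\infty),$$ where $\Delta$ is the largest absolute value of a determinant of a square submatrix of $A$.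
   Context: $\mathrm{rec.cone}(\mathcal S)=\{d: x+\lambda d\in\mathcal S\ \forall\lambda\ge0,\ \forall x\in\mathcal S\}$; $\mathrm{conv}$ denotes convex hull. *)

theory Defs
  imports "HOL-Analysis.Analysis"
begin

definition int_points :: "(real^'n) set" where
  "int_points = {x. \<forall>i. x $ i \<in> \<int>}"

definition rec_cone :: "(real^'n) set \<Rightarrow> (real^'n) set" where
  "rec_cone S = {d. \<forall>x\<in>S. \<forall>t::real. t \<ge> 0 \<longrightarrow> x + t *\<^sub>R d \<in> S}"

text \<open>Determinant of the square submatrix of A with rows rs and columns cs
  (given as distinct lists of equal length), Leibniz formula.\<close>
definition subdet :: "real^'n^'m \<Rightarrow> 'm list \<Rightarrow> 'n list \<Rightarrow> real" where
  "subdet A rs cs = (\<Sum>p | p permutes {0..<length rs}.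
       of_int (sign p) * (\<Prod>i<length rs. A $ (rs ! i) $ (cs ! (p i))))"

definition max_subdet :: "real^'n^'m \<Rightarrow> real" where
  "max_subdet A = Max {\<bar>subdet A rs cs\<bar> | rs cs.
       distinct rs \<and> distinct cs \<and> length rs = length cs \<and> length rs \<ge> 1}"

end

theory Submission imports Defs Jordan_Normal_Form.Determinant begin
hide_const (open) Matrix.row Matrix.col Matrix.vec Matrix.mat Matrix.orthogonal
no_notation vec_index (infixl "$" 100)
no_notation scalar_prod (infix "\<bullet>" 70)

lemma cramer_bound:
  fixes M :: "real Matrix.mat" and u a :: "nat \<Rightarrow> real"
  assumes M: "M \<in> carrier_mat k k" and dM: "\<bar>Determinant.det M\<bar> \<ge> 1"
  and sol: "\<And>q. q < k \<Longrightarrow> (\<Sum>p<k. u p * M $$ (p,q)) = a q"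
  and D: "\<And>q. q < k \<Longrightarrow> \<bar>Determinant.det (mat_delete M p q)\<bar> \<le> D"
  and p: "p < k"
  shows "\<bar>u p\<bar> \<le> D * (\<Sum>q<k. \<bar>a q\<bar>)"
proof -
  define T where "T = transpose_mat M"
  have T: "T \<in> carrier_mat k k" using M by (simp add: T_def)
  define x where "x = Matrix.vec k u"
  have Tx: "T *\<^sub>v x = Matrix.vec k a"
  proof (rule eq_vecI)
    fix q assume q: "q < dim_vec (Matrix.vec k a)"
    then have q': "q < k" by simp
    have "vec_index (T *\<^sub>v x) q = (\<Sum>p<k. u p * M $$ (p,q))"
      using M q' by (auto simp: T_def x_def mult_mat_vec_def scalar_prod_def atLeast0LessThan mult.commute intro!: sum.cong)
    then show "vec_index (T *\<^sub>v x) q = vec_index (Matrix.vec k a) q" using sol[OF q'] q' by simp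
  qed (use T in \<open>simp add: x_def\<close>)
  define R where "R = replace_col T (Matrix.vec k a) p"
  have R: "R \<in> carrier_mat k k" using T by (simp add: R_def replace_col_def)
  have "Determinant.det R = u p * Determinant.det T"
    using cramer_lemma_mat[OF T _ p, of x] Tx by (simp add: x_def R_def p)
  also have "Determinant.det T = Determinant.det M" using M by (simp add: T_def det_transpose)
  finally have eq1: "Determinant.det R = u p * Determinant.det M" .
  have "Determinant.det R = (\<Sum>q<k. R $$ (q,p) * cofactor R q p)"
    by (rule laplace_expansion_column[OF R p])
  also have "\<dots> = (\<Sum>q<k. a q * ((-1)^(q+p) * Determinant.det (mat_delete M p q)))"
  proof (rule sum.cong[OF refl])
    fix q assume q: "q \<in> {..<k}"
    have "mat_delete R q p = transpose_mat (mat_delete M p q)"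
      using M T q p by (auto simp: R_def T_def mat_delete_def replace_col_def intro!: eq_matI)
    moreover have "mat_delete M p q \<in> carrier_mat (k-1) (k-1)" using M by (rule mat_delete_carrier)
    ultimately have "Determinant.det (mat_delete R q p) = Determinant.det (mat_delete M p q)"
      by (simp add: det_transpose)
    moreover have "R $$ (q,p) = a q" using q p T by (simp add: R_def replace_col_def)
    ultimately show "R $$ (q,p) * cofactor R q p = a q * ((-1)^(q+p) * Determinant.det (mat_delete M p q))"
      by (simp add: cofactor_def)
  qed
  finally have eq2: "u p * Determinant.det M = (\<Sum>q<k. a q * ((-1)^(q+p) * Determinant.det (mat_delete M p q)))"
    using eq1 by simp
  have "\<bar>u p\<bar> \<le> \<bar>u p\<bar> * \<bar>Determinant.det M\<bar>" using dM
    by (metis abs_ge_zero mult.right_neutral mult_left_mono)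
  also have "\<dots> = \<bar>\<Sum>q<k. a q * ((-1)^(q+p) * Determinant.det (mat_delete M p q))\<bar>"
    using eq2 by (metis abs_mult)
  also have "\<dots> \<le> (\<Sum>q<k. \<bar>a q * ((-1)^(q+p) * Determinant.det (mat_delete M p q))\<bar>)"
    by (rule sum_abs)
  also have "\<dots> \<le> (\<Sum>q<k. \<bar>a q\<bar> * D)"
  proof (rule sum_mono)
    fix q assume q: "q \<in> {..<k}"
    have "\<bar>a q * ((-1)^(q+p) * Determinant.det (mat_delete M p q))\<bar>
       = \<bar>a q\<bar> * \<bar>Determinant.det (mat_delete M p q)\<bar>" by (simp add: abs_mult power_abs)
    also have "\<dots> \<le> \<bar>a q\<bar> * D" using D q by (intro mult_left_mono) auto
    finally show "\<bar>a q * ((-1)^(q+p) * Determinant.det (mat_delete M p q))\<bar> \<le> \<bar>a q\<bar> * D" .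
  qed
  also have "\<dots> = D * (\<Sum>q<k. \<bar>a q\<bar>)" by (simp add: sum_distrib_left mult.commute)
  finally show ?thesis .
qed

definition lmat :: "real^'n^'m \<Rightarrow> 'm list \<Rightarrow> 'n list \<Rightarrow> real Matrix.mat" where
  "lmat A rs cs = Matrix.mat (length rs) (length rs) (\<lambda>(i,j). A $ (rs!i) $ (cs!j))"

definition dl :: "nat \<Rightarrow> 'a list \<Rightarrow> 'a list" where
  "dl p xs = take p xs @ drop (Suc p) xs"

lemma dl_length: "p < length xs \<Longrightarrow> length (dl p xs) = length xs - 1"
  by (simp add: dl_def)

lemma dl_nth: "p < length xs \<Longrightarrow> i < length xs - 1 \<Longrightarrow> dl p xs ! i = xs ! (if i < p then i else Suc i)"
  by (auto simp: dl_def nth_append min_def)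

lemma dl_distinct: "distinct xs \<Longrightarrow> p < length xs \<Longrightarrow> distinct (dl p xs)"
proof -
  assume d: "distinct xs" and p: "p < length xs"
  have "xs = take p xs @ xs ! p # drop (Suc p) xs" using p by (simp add: id_take_nth_drop)
  then have "distinct (take p xs @ xs ! p # drop (Suc p) xs)" using d by metis
  then show ?thesis by (simp add: dl_def)
qed

lemma lmat_carrier: "lmat A rs cs \<in> carrier_mat (length rs) (length rs)"
  by (simp add: lmat_def)

lemma subdet_lmat: "subdet A rs cs = Determinant.det (lmat A rs cs)"
  by (simp add: subdet_def det_def lmat_def atLeast0LessThan)

lemma mat_delete_lmat:
  assumes "p < length rs" "q < length rs" "length cs = length rs"
  shows "mat_delete (lmat A rs cs) p q = lmat A (dl p rs) (dl q cs)"
  using assms by (auto simp: mat_delete_def lmat_def dl_length dl_nth intro!: eq_matI)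

lemma finite_distinct_lists: "finite {xs :: ('a::finite) list. distinct xs}"
  using finite_subset_distinct[of "UNIV :: 'a set"] by simp

lemma max_subdet_finite:
  "finite {\<bar>subdet A rs cs\<bar> | rs cs.
       distinct rs \<and> distinct cs \<and> length rs = length cs \<and> length rs \<ge> 1}"
proof -
  have "{\<bar>subdet A rs cs\<bar> | rs cs.
       distinct rs \<and> distinct cs \<and> length rs = length cs \<and> length rs \<ge> 1}
     \<subseteq> (\<lambda>(rs,cs). \<bar>subdet A rs cs\<bar>) ` ({rs. distinct rs} \<times> {cs. distinct cs})" by auto
  then show ?thesis using finite_distinct_lists by (meson finite_SigmaI finite_imageI finite_subset)
qed

lemma max_subdet_ge:
  assumes "distinct rs" "distinct cs" "length rs = length cs" "length rs \<ge> 1"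
  shows "\<bar>subdet A rs cs\<bar> \<le> max_subdet A"
  unfolding max_subdet_def using assms by (intro Max_ge[OF max_subdet_finite]) blast

lemma max_subdet_nonneg: "0 \<le> max_subdet (A::real^'n^'m)"
proof -
  obtain i :: 'm and j :: 'n where True by simp
  have "\<bar>subdet A [i] [j]\<bar> \<le> max_subdet A" by (rule max_subdet_ge) auto
  then show ?thesis by linarith
qed

lemma det_lmat_Ints:
  assumes "\<forall>i j. (A::real^'n^'m) $ i $ j \<in> \<int>"
  shows "Determinant.det (lmat A rs cs) \<in> \<int>"
  using assms unfolding det_def lmat_def
  by (auto intro!: Ints_sum Ints_prod Ints_mult simp: atLeast0LessThan)

lemma det_mat_delete_lmat_le:
  assumes "distinct rs" "distinct cs" "length rs = length cs" "p < length rs" "q < length rs"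
    and D1: "1 \<le> max_subdet A"
  shows "\<bar>Determinant.det (mat_delete (lmat A rs cs) p q)\<bar> \<le> max_subdet A"
proof (cases "length rs = 1")
  case True
  have "mat_delete (lmat A rs cs) p q \<in> carrier_mat 0 0"
    using mat_delete_carrier[OF lmat_carrier, of A rs cs p q] True by simp
  then have "Determinant.det (mat_delete (lmat A rs cs) p q) = 1"
    by (subst det_def'[of _ 0]) (simp_all add: permutes_empty)
  then show ?thesis using D1 by simp
next
  case False
  then have "length rs \<ge> 2" using assms by linarith
  have "Determinant.det (mat_delete (lmat A rs cs) p q) = subdet A (dl p rs) (dl q cs)"
    using assms by (simp add: mat_delete_lmat subdet_lmat)
  also have "\<bar>\<dots>\<bar> \<le> max_subdet A"
    using assms \<open>length rs \<ge> 2\<close>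
    by (intro max_subdet_ge) (auto simp: dl_distinct dl_length)
  finally show ?thesis .
qed

lemma sum_set_nth: "distinct xs \<Longrightarrow> sum f (set xs) = (\<Sum>p<length xs. f (xs!p))"
  by (simp add: sum.distinct_set_conv_list sum_list_sum_nth atLeast0LessThan)


lemma row_eq: "row i (A::real^'n^'m) = A $ i"
  by (simp add: Finite_Cartesian_Product.row_def Finite_Cartesian_Product.vec_eq_iff)

lemma dual_bound:
  fixes A :: "real^'n^'m" and \<alpha> :: "real^'n" and u :: "'m \<Rightarrow> real"
  assumes A_int: "\<forall>i j. A $ i $ j \<in> \<int>"
    and u_nn: "\<forall>i. u i \<ge> 0"
    and u_sum: "(\<Sum>i\<in>UNIV. u i *\<^sub>R row i A) = - \<alpha>"
    and indep: "\<And>w. (\<forall>i. u i = 0 \<longrightarrow> w i = 0) \<Longrightarrow> (\<Sum>i\<in>UNIV. w i *\<^sub>R row i A) = 0 \<Longrightarrow> (\<forall>i. w i = 0)"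
  shows "(\<Sum>i\<in>UNIV. u i) \<le> real CARD('n) * (\<Sum>j\<in>UNIV. \<bar>\<alpha> $ j\<bar>) * max_subdet A"
proof (cases "\<forall>i. u i = 0")
  case True
  then have "(\<Sum>i\<in>UNIV. u i) = 0" by simp
  also have "0 \<le> real CARD('n) * (\<Sum>j\<in>UNIV. \<bar>\<alpha> $ j\<bar>) * max_subdet A"
    by (intro mult_nonneg_nonneg max_subdet_nonneg sum_nonneg) auto
  finally show ?thesis .
next
  case False
  define J where "J = {i. u i \<noteq> 0}"
  have Jne: "J \<noteq> {}" using False by (auto simp: J_def)
  define col :: "'n \<Rightarrow> real^'m" where "col c = (\<chi> i. if i \<in> J then A $ i $ c else 0)" for c
  define W where "W = {x::real^'m. \<forall>i. i \<notin> J \<longrightarrow> x $ i = 0}"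
  have subW: "subspace W" by (auto simp: subspace_def W_def)
  have colW: "range col \<subseteq> W" by (auto simp: W_def col_def)
  have sum_comp: "(\<Sum>i\<in>UNIV. w i *\<^sub>R row i A) $ c = (\<Sum>i\<in>UNIV. w i * A $ i $ c)" for w c
    by (simp add: row_eq)
  have span_eq: "span (range col) = W"
  proof (rule ccontr)
    assume ne: "span (range col) \<noteq> W"
    have "span (range col) \<subseteq> W" using colW subW by (rule span_minimal)
    have spW: "span W = W" using subW by (rule span_eq_iff[THEN iffD2])
    have "span (range col) \<subset> W" using ne \<open>span (range col) \<subseteq> W\<close> by (simp add: psubset_eq)
    then have psub: "span (range col) \<subset> span W" by (subst spW)
    then obtain y where y0: "y \<noteq> 0" and yW: "y \<in> span W"
      and yo: "\<And>z. z \<in> span (range col) \<Longrightarrow> orthogonal y z"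
      using orthogonal_to_subspace_exists_gen[OF psub] by blast
    have yW': "y \<in> W" using yW spW by simp
    define w where "w i = y $ i" for i
    have w1: "\<forall>i. u i = 0 \<longrightarrow> w i = 0" using yW' by (auto simp: W_def J_def w_def)
    have w2: "(\<Sum>i\<in>UNIV. w i *\<^sub>R row i A) = 0"
    proof (subst Finite_Cartesian_Product.vec_eq_iff, intro allI)
      fix c
      have "orthogonal y (col c)" by (rule yo) (simp add: span_base)
      then have "(\<Sum>i\<in>UNIV. y $ i * col c $ i) = 0" by (simp add: real_inner_class.orthogonal_def inner_vec_def)
      moreover have "(\<Sum>i\<in>UNIV. y $ i * col c $ i) = (\<Sum>i\<in>UNIV. w i * A $ i $ c)"
        using yW' by (intro sum.cong) (auto simp: col_def w_def W_def)
      ultimately show "(\<Sum>i\<in>UNIV. w i *\<^sub>R row i A) $ c = 0 $ c" by (simp add: row_eq)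
    qed
    have "\<forall>i. w i = 0" by (rule indep[OF w1 w2])
    then have "y = 0" by (simp add: Finite_Cartesian_Product.vec_eq_iff w_def)
    with y0 show False by simp
  qed
  define d where "d = (\<lambda>i. axis i (1::real)) ` J"
  have dB: "d \<subseteq> Basis" by (auto simp: d_def)
  have W_alt: "W = {x::real^'m. \<forall>b\<in>Basis. b \<notin> d \<longrightarrow> x \<bullet> b = 0}"
    by (auto simp: W_def d_def Basis_vec_def inner_axis axis_eq_axis)
  have card_d: "card d = card J"
    unfolding d_def by (rule card_image) (auto simp: inj_on_def axis_eq_axis)
  have dim_col: "dim (range col) = card J"
  proof -
    have "dim (range col) = dim (span (range col))" by simp
    also have "\<dots> = dim W" using span_eq by simp
    also have "\<dots> = card d" unfolding W_alt by (rule dim_substandard[OF dB])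
    finally show ?thesis using card_d by simp
  qed
  obtain B where BS: "B \<subseteq> range col" and Bi: "independent B" and Bc: "card B = card J"
    using basis_exists[of "range col"] dim_col by metis
  obtain C where Cinj: "inj_on col C" and BC: "B = col ` C"
    using BS subset_image_inj[of B col UNIV] by blast
  have cardC: "card C = card J" using Bc BC Cinj by (simp add: card_image)
  obtain rs where rs: "set rs = J" "distinct rs" using finite_distinct_list[of J] by auto
  obtain cs where cs: "set cs = C" "distinct cs" using finite_distinct_list[of C] by auto
  define k where "k = length rs"
  have lrs: "length rs = card J" using rs List.distinct_card by metis
  have lcs: "length cs = k" using cs cardC lrs k_def List.distinct_card by metis
  have k1: "k \<ge> 1" using Jne lrs k_def by (simp add: Suc_le_eq card_gt_0_iff)
  define M where "M = lmat A rs cs"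
  have Mc: "M \<in> carrier_mat k k" by (simp add: M_def k_def lmat_carrier)
  have detM0: "Determinant.det M \<noteq> 0"
  proof
    assume "Determinant.det M = 0"
    then obtain v where v: "v \<in> carrier_vec k" "v \<noteq> 0\<^sub>v k" "M *\<^sub>v v = 0\<^sub>v k"
      using det_0_iff_vec_prod_zero_field[OF Mc] by blast
    define f where "f q = col (cs ! q)" for q
    have finj: "inj_on f {..<k}"
      using Cinj cs lcs unfolding f_def inj_on_def
      by (metis lessThan_iff nth_eq_iff_index_eq nth_mem)
    have fB: "f ` {..<k} = B"
      using BC cs lcs by (auto simp: f_def set_conv_nth image_iff)
    define g where "g b = vec_index v (the_inv_into {..<k} f b)" for b
    have gf: "q < k \<Longrightarrow> g (f q) = vec_index v q" for q
      using the_inv_into_f_f[OF finj] by (simp add: g_def)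
    have sum0: "(\<Sum>q<k. vec_index v q *\<^sub>R f q) = 0"
    proof (subst Finite_Cartesian_Product.vec_eq_iff, intro allI)
      fix i
      show "(\<Sum>q<k. vec_index v q *\<^sub>R f q) $ i = 0 $ i"
      proof (cases "i \<in> J")
        case True
        then obtain p where p: "p < k" "i = rs ! p" using rs k_def by (metis in_set_conv_nth)
        have e1: "vec_index (M *\<^sub>v v) p = 0" using v p by simp
        have "vec_index (M *\<^sub>v v) p = (\<Sum>q<k. M $$ (p,q) * vec_index v q)"
          using Mc p v(1) by (auto simp: index_mult_mat_vec scalar_prod_def atLeast0LessThan intro!: sum.cong)
        also have "\<dots> = (\<Sum>q<k. vec_index v q * (f q $ i))"
          using p True Mc by (intro sum.cong) (auto simp: M_def lmat_def f_def col_def k_def)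
        finally have "(\<Sum>q<k. vec_index v q * (f q $ i)) = 0" using e1 by simp
        then show ?thesis by simp
      next
        case False
        then show ?thesis by (simp add: f_def col_def)
      qed
    qed
    have "(\<Sum>b\<in>B. g b *\<^sub>R b) = (\<Sum>q<k. g (f q) *\<^sub>R f q)"
      unfolding fB[symmetric] by (rule sum.reindex[OF finj, unfolded comp_def])
    also have "\<dots> = (\<Sum>q<k. vec_index v q *\<^sub>R f q)" by (intro sum.cong) (auto simp: gf)
    finally have s0: "(\<Sum>b\<in>B. g b *\<^sub>R b) = 0" using sum0 by simp
    have "\<exists>q<k. vec_index v q \<noteq> 0"
    proof (rule ccontr)
      assume "\<not> (\<exists>q<k. vec_index v q \<noteq> 0)"
      then have "v = 0\<^sub>v k" using v(1) by (intro eq_vecI) auto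
      with v(2) show False by simp
    qed
    then obtain q where q: "q < k" "vec_index v q \<noteq> 0" by blast
    have fq: "f q \<in> B" "g (f q) \<noteq> 0" using q fB gf by auto
    have finB: "finite B" using fB by blast
    have "dependent B" unfolding real_vector.dependent_finite[OF finB] using fq s0 by blast
    with Bi show False by simp
  qed
  have detM1: "\<bar>Determinant.det M\<bar> \<ge> 1"
    using detM0 det_lmat_Ints[OF A_int] by (simp add: M_def Ints_nonzero_abs_ge1)
  have D1: "1 \<le> max_subdet A"
  proof -
    have "\<bar>subdet A rs cs\<bar> \<le> max_subdet A"
      using rs cs lcs k1 k_def by (intro max_subdet_ge) auto
    then show ?thesis using detM1 by (simp add: subdet_lmat M_def)
  qed
  have ubound: "\<bar>u (rs ! p)\<bar> \<le> max_subdet A * (\<Sum>j\<in>UNIV. \<bar>\<alpha> $ j\<bar>)" if p: "p < k" for p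
  proof -
    have "\<bar>u (rs ! p)\<bar> \<le> max_subdet A * (\<Sum>q<k. \<bar>- \<alpha> $ (cs ! q)\<bar>)"
    proof (rule cramer_bound[OF Mc detM1 _ _ p])
      fix q assume q: "q < k"
      have "(\<Sum>p<k. u (rs ! p) * M $$ (p, q)) = (\<Sum>p<k. u (rs ! p) * A $ (rs ! p) $ (cs ! q))"
        using q by (intro sum.cong) (auto simp: M_def lmat_def k_def)
      also have "\<dots> = (\<Sum>i\<in>J. u i * A $ i $ (cs ! q))"
        using sum_set_nth[OF rs(2), of "\<lambda>i. u i * A $ i $ (cs ! q)"] rs k_def by simp
      also have "\<dots> = (\<Sum>i\<in>UNIV. u i * A $ i $ (cs ! q))"
        by (intro sum.mono_neutral_left) (auto simp: J_def)
      also have "\<dots> = (- \<alpha>) $ (cs ! q)" using u_sum sum_comp by metis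
      finally show "(\<Sum>p<k. u (rs ! p) * M $$ (p, q)) = - \<alpha> $ (cs ! q)" by simp
    next
      fix q assume q: "q < k"
      show "\<bar>Determinant.det (mat_delete M p q)\<bar> \<le> max_subdet A"
        unfolding M_def using rs cs lcs p q k_def D1 by (intro det_mat_delete_lmat_le) auto
    qed
    also have "(\<Sum>q<k. \<bar>- \<alpha> $ (cs ! q)\<bar>) = (\<Sum>j\<in>set cs. \<bar>\<alpha> $ j\<bar>)"
      using sum_set_nth[OF cs(2), of "\<lambda>j. \<bar>\<alpha> $ j\<bar>"] lcs by simp
    also have "\<dots> \<le> (\<Sum>j\<in>UNIV. \<bar>\<alpha> $ j\<bar>)" by (intro sum_mono2) auto
    finally show ?thesis using D1 by (smt (verit) mult_left_mono)
  qed
  have "(\<Sum>i\<in>UNIV. u i) = (\<Sum>i\<in>J. u i)"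
    by (intro sum.mono_neutral_right) (auto simp: J_def)
  also have "\<dots> = (\<Sum>p<k. u (rs ! p))" using sum_set_nth[OF rs(2), of u] rs k_def by simp
  also have "\<dots> \<le> (\<Sum>p<k. max_subdet A * (\<Sum>j\<in>UNIV. \<bar>\<alpha> $ j\<bar>))"
    using ubound by (intro sum_mono) (metis abs_ge_self lessThan_iff order_trans)
  also have "\<dots> = real k * (max_subdet A * (\<Sum>j\<in>UNIV. \<bar>\<alpha> $ j\<bar>))" by simp
  also have "\<dots> \<le> real CARD('n) * (max_subdet A * (\<Sum>j\<in>UNIV. \<bar>\<alpha> $ j\<bar>))"
  proof (rule mult_right_mono)
    have "k = card C" using lcs cs List.distinct_card by metis
    also have "\<dots> \<le> CARD('n)" by (rule card_mono) auto
    finally show "real k \<le> real CARD('n)" by simp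
    show "0 \<le> max_subdet A * (\<Sum>j\<in>UNIV. \<bar>\<alpha> $ j\<bar>)"
      using D1 by (intro mult_nonneg_nonneg sum_nonneg) auto
  qed
  finally show ?thesis by (simp add: mult_ac)
qed


lemma mv_row: "((A::real^'n^'m) *v x) $ i = row i A \<bullet> x"
  by (simp add: matrix_vector_mult_def inner_vec_def row_eq)

lemma int_inner_Ints:
  assumes "\<forall>j. (\<alpha>::real^'n) $ j \<in> \<int>" "z \<in> int_points"
  shows "\<alpha> \<bullet> z \<in> \<int>"
  using assms unfolding int_points_def inner_vec_def
  by (auto intro!: Ints_sum Ints_mult)

lemma kkt:
  fixes A :: "real^'n^'m" and b :: "real^'m" and \<alpha> z0 :: "real^'n"
  assumes z0P: "\<forall>i. row i A \<bullet> z0 \<le> b $ i"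
    and zmin: "\<And>y. (\<forall>i. row i A \<bullet> y \<le> b $ i) \<Longrightarrow> \<alpha> \<bullet> z0 \<le> \<alpha> \<bullet> y"
  shows "\<exists>u. (\<forall>i. u i \<ge> 0) \<and> (\<forall>i. row i A \<bullet> z0 \<noteq> b $ i \<longrightarrow> u i = 0)
           \<and> (\<Sum>i\<in>UNIV. u i *\<^sub>R row i A) = - \<alpha>"
proof -
  define I where "I = {i. row i A \<bullet> z0 = b $ i}"
  define F where "F = (\<lambda>i. - row i A) ` I"
  define H where "H = convex_cone hull F"
  have finF: "finite F" by (simp add: F_def)
  have clH: "closed H" unfolding H_def by (rule closed_convex_cone_hull[OF finF])
  have cvH: "convex H" unfolding H_def by (rule convex_convex_cone_hull)
  define K where "K = {(\<Sum>i\<in>UNIV. u i *\<^sub>R (- row i A)) | u. (\<forall>i. u i \<ge> 0) \<and> (\<forall>i. i \<notin> I \<longrightarrow> u i = 0)}"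
  have HK: "H \<subseteq> K"
    unfolding H_def
  proof (rule hull_minimal)
    show "F \<subseteq> K"
    proof
      fix x assume "x \<in> F"
      then obtain i where i: "i \<in> I" "x = - row i A" by (auto simp: F_def)
      define u where "u j = (if j = i then 1 else (0::real))" for j
      have "(\<Sum>j\<in>UNIV. u j *\<^sub>R (- row j A)) = - row i A"
        by (simp add: u_def if_distrib[of "\<lambda>c. c *\<^sub>R _"] sum_negf cong: if_cong)
      moreover have "(\<forall>j. u j \<ge> 0) \<and> (\<forall>j. j \<notin> I \<longrightarrow> u j = 0)" using i by (auto simp: u_def)
      ultimately show "x \<in> K" unfolding K_def mem_Collect_eq using i(2) by (intro exI[of _ u]) simp
    qed
    show "convex_cone K"
      unfolding convex_cone_def
    proof (intro conjI)
      have "(\<Sum>i\<in>UNIV. (0::real) *\<^sub>R (- row i A)) \<in> K" unfolding K_def mem_Collect_eq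
        by (intro exI[of _ "\<lambda>i. 0"]) simp
      then show "K \<noteq> {}" by blast
      show "convex K"
        unfolding convex_def
      proof (intro ballI allI impI)
        fix x y and s t :: real
        assume x: "x \<in> K" and y: "y \<in> K" and st: "0 \<le> s" "0 \<le> t" "s + t = 1"
        obtain u where u: "x = (\<Sum>i\<in>UNIV. u i *\<^sub>R (- row i A))" "\<forall>i. u i \<ge> 0" "\<forall>i. i \<notin> I \<longrightarrow> u i = 0"
          using x unfolding K_def by blast
        obtain v where v: "y = (\<Sum>i\<in>UNIV. v i *\<^sub>R (- row i A))" "\<forall>i. v i \<ge> 0" "\<forall>i. i \<notin> I \<longrightarrow> v i = 0"
          using y unfolding K_def by blast
        have "s *\<^sub>R x + t *\<^sub>R y = (\<Sum>i\<in>UNIV. (s * u i + t * v i) *\<^sub>R (- row i A))"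
          unfolding u v by (simp add: scaleR_sum_right sum.distrib[symmetric] scaleR_add_left algebra_simps)
        moreover have "\<forall>i. s * u i + t * v i \<ge> 0" using u v st by (simp add: add_nonneg_nonneg)
        moreover have "\<forall>i. i \<notin> I \<longrightarrow> s * u i + t * v i = 0" using u v by simp
        ultimately show "s *\<^sub>R x + t *\<^sub>R y \<in> K" unfolding K_def mem_Collect_eq
          by (intro exI[of _ "\<lambda>i. s * u i + t * v i"]) simp
      qed
      show "conic K"
        unfolding conic_def
      proof (intro allI impI)
        fix x and c :: real assume x: "x \<in> K" and c: "0 \<le> c"
        obtain u where u: "x = (\<Sum>i\<in>UNIV. u i *\<^sub>R (- row i A))" "\<forall>i. u i \<ge> 0" "\<forall>i. i \<notin> I \<longrightarrow> u i = 0"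
          using x unfolding K_def by blast
        have "c *\<^sub>R x = (\<Sum>i\<in>UNIV. (c * u i) *\<^sub>R (- row i A))"
          unfolding u by (simp add: scaleR_sum_right)
        moreover have "\<forall>i. c * u i \<ge> 0" using u c by simp
        moreover have "\<forall>i. i \<notin> I \<longrightarrow> c * u i = 0" using u by simp
        ultimately show "c *\<^sub>R x \<in> K" unfolding K_def mem_Collect_eq
          by (intro exI[of _ "\<lambda>i. c * u i"]) simp
      qed
    qed
  qed
  have aH: "\<alpha> \<in> H"
  proof (rule ccontr)
    assume "\<alpha> \<notin> H"
    then obtain a c where ac: "a \<bullet> \<alpha> < c" and aH: "\<forall>x\<in>H. c < a \<bullet> x"
      using separating_hyperplane_closed_point[OF cvH clH] by blast
    have 0: "0 \<in> H" unfolding H_def by (rule convex_cone_hull_contains_0)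
    then have c0: "c < 0" using aH by force
    have nn: "a \<bullet> x \<ge> 0" if x: "x \<in> H" for x
    proof (rule ccontr)
      assume neg: "\<not> a \<bullet> x \<ge> 0"
      define t where "t = c / (a \<bullet> x)"
      have t: "t \<ge> 0" using neg c0 by (simp add: t_def divide_nonpos_neg)
      have "t *\<^sub>R x \<in> H" unfolding H_def using x t by (simp add: H_def convex_cone_hull_mul)
      then have "c < a \<bullet> (t *\<^sub>R x)" using aH by blast
      also have "a \<bullet> (t *\<^sub>R x) = c" using neg by (simp add: t_def)
      finally show False by simp
    qed
    have rowI: "row i A \<bullet> a \<le> 0" if "i \<in> I" for i
    proof -
      have "- row i A \<in> H" unfolding H_def F_def using that by (intro hull_inc) blast
      then have "a \<bullet> (- row i A) \<ge> 0" by (rule nn)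
      then show ?thesis by (simp add: inner_commute)
    qed
    have aa: "\<alpha> \<bullet> a < 0" using ac c0 by (simp add: inner_commute)
    define L where "L = 1 + (\<Sum>i\<in>UNIV. \<bar>row i A \<bullet> a\<bar>)"
    have L1: "L \<ge> 1" by (simp add: L_def sum_nonneg)
    define E where "E = insert 1 ((\<lambda>i. b $ i - row i A \<bullet> z0) ` (- I))"
    define \<epsilon> where "\<epsilon> = Min E"
    have finE: "finite E" by (simp add: E_def)
    have Epos: "\<forall>e\<in>E. e > 0" using z0P by (auto simp: E_def I_def order_le_less)
    have eps: "\<epsilon> > 0" using Min_in[OF finE] Epos by (auto simp: \<epsilon>_def E_def)
    have eps_le: "\<epsilon> \<le> b $ i - row i A \<bullet> z0" if "i \<notin> I" for i
      unfolding \<epsilon>_def using that finE by (intro Min_le) (auto simp: E_def)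
    define t where "t = \<epsilon> / L"
    have t0: "t > 0" using eps L1 by (simp add: t_def)
    define z where "z = z0 + t *\<^sub>R a"
    have zP: "\<forall>i. row i A \<bullet> z \<le> b $ i"
    proof
      fix i
      have ez: "row i A \<bullet> z = row i A \<bullet> z0 + t * (row i A \<bullet> a)" by (simp add: z_def inner_add_right)
      show "row i A \<bullet> z \<le> b $ i"
      proof (cases "i \<in> I")
        case True
        then show ?thesis using ez rowI[OF True] t0 z0P
          by (smt (verit) mult_nonneg_nonpos)
      next
        case False
        have "\<bar>row i A \<bullet> a\<bar> \<le> (\<Sum>i\<in>UNIV. \<bar>row i A \<bullet> a\<bar>)"
          by (rule member_le_sum) auto
        then have "\<bar>row i A \<bullet> a\<bar> \<le> L" by (simp add: L_def)
        then have "t * (row i A \<bullet> a) \<le> t * L" using t0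
          by (smt (verit) mult_left_mono abs_ge_self)
        also have "t * L = \<epsilon>" using L1 by (simp add: t_def)
        finally show ?thesis using ez eps_le[OF False] by linarith
      qed
    qed
    have "\<alpha> \<bullet> z = \<alpha> \<bullet> z0 + t * (\<alpha> \<bullet> a)" by (simp add: z_def inner_add_right)
    also have "\<dots> < \<alpha> \<bullet> z0" using t0 aa by (simp add: mult_pos_neg)
    finally show False using zmin[OF zP] by simp
  qed
  then have "\<alpha> \<in> K" using HK by blast
  then obtain u where u: "\<alpha> = (\<Sum>i\<in>UNIV. u i *\<^sub>R (- row i A))" "\<forall>i. u i \<ge> 0" "\<forall>i. i \<notin> I \<longrightarrow> u i = 0"
    unfolding K_def by blast
  have "(\<Sum>i\<in>UNIV. u i *\<^sub>R row i A) = - \<alpha>" unfolding u(1) by (simp add: sum_negf)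
  then show ?thesis using u(2,3) by (auto simp: I_def)
qed


lemma min_support:
  fixes A :: "real^'n^'m" and \<alpha> :: "real^'n" and T :: "'m \<Rightarrow> bool"
  assumes "\<exists>u. (\<forall>i. u i \<ge> 0) \<and> (\<forall>i. T i \<longrightarrow> u i = 0) \<and> (\<Sum>i\<in>UNIV. u i *\<^sub>R row i A) = - \<alpha>"
  shows "\<exists>u. (\<forall>i. u i \<ge> 0) \<and> (\<forall>i. T i \<longrightarrow> u i = 0) \<and> (\<Sum>i\<in>UNIV. u i *\<^sub>R row i A) = - \<alpha>
    \<and> (\<forall>w. (\<forall>i. u i = 0 \<longrightarrow> w i = 0) \<and> (\<Sum>i\<in>UNIV. w i *\<^sub>R row i A) = 0 \<longrightarrow> (\<forall>i. w i = 0))"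
proof -
  define P where "P u \<longleftrightarrow> (\<forall>i. u i \<ge> 0) \<and> (\<forall>i. T i \<longrightarrow> u i = 0) \<and> (\<Sum>i\<in>UNIV. u i *\<^sub>R row i A) = - \<alpha>"
    for u :: "'m \<Rightarrow> real"
  obtain u0 where "P u0" using assms by (auto simp: P_def)
  then obtain u where Pu: "P u" and umin: "\<And>y. P y \<Longrightarrow> card {i. u i \<noteq> 0} \<le> card {i. y i \<noteq> 0}"
    using ex_has_least_nat[of P u0 "\<lambda>u. card {i. u i \<noteq> 0}"] by blast
  have indep: "\<forall>i. w i = 0" if w1: "\<forall>i. u i = 0 \<longrightarrow> w i = 0" and w2: "(\<Sum>i\<in>UNIV. w i *\<^sub>R row i A) = 0" for w
  proof (rule ccontr)
    assume "\<not> (\<forall>i. w i = 0)"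
    then obtain j where j: "w j \<noteq> 0" by blast
    obtain w' where w'1: "\<forall>i. u i = 0 \<longrightarrow> w' i = 0" and w'2: "(\<Sum>i\<in>UNIV. w' i *\<^sub>R row i A) = 0"
      and j': "w' j > 0"
    proof (cases "w j > 0")
      case True
      then show ?thesis using that w1 w2 by blast
    next
      case False
      then have "(- w) j > 0" using j by simp
      moreover have "\<forall>i. u i = 0 \<longrightarrow> (- w) i = 0" using w1 by simp
      moreover have "(\<Sum>i\<in>UNIV. (- w) i *\<^sub>R row i A) = 0" using w2 by (simp add: sum_negf)
      ultimately show ?thesis using that by blast
    qed
    define Q where "Q = {i. w' i > 0}"
    have finQ: "finite Q" by simp
    have jQ: "j \<in> Q" using j' by (simp add: Q_def)
    define t where "t = Min ((\<lambda>i. u i / w' i) ` Q)"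
    have "t \<in> (\<lambda>i. u i / w' i) ` Q" unfolding t_def using finQ jQ by (intro Min_in) auto
    then obtain i0 where i0: "i0 \<in> Q" "t = u i0 / w' i0" by blast
    have tle: "t \<le> u i / w' i" if "i \<in> Q" for i
      unfolding t_def using finQ that by (intro Min_le) auto
    have u_nn: "\<forall>i. u i \<ge> 0" using Pu by (simp add: P_def)
    have wi0: "w' i0 > 0" using i0 by (simp add: Q_def)
    have ui0: "u i0 \<noteq> 0" using w'1 wi0 by auto
    have t0: "t \<ge> 0" using i0 u_nn wi0 by simp
    define u' where "u' i = u i - t * w' i" for i
    have Pu': "P u'"
      unfolding P_def
    proof (intro conjI allI impI)
      fix i
      show "u' i \<ge> 0"
      proof (cases "w' i > 0")
        case True
        then have "t \<le> u i / w' i" using tle by (simp add: Q_def)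
        then have "t * w' i \<le> u i" using True by (simp add: le_divide_eq)
        then show ?thesis by (simp add: u'_def)
      next
        case False
        then have "t * w' i \<le> 0" using t0 by (simp add: mult_nonneg_nonpos)
        then show ?thesis using u_nn by (simp add: u'_def) (smt (verit) u_nn)
      qed
    next
      fix i assume "T i"
      then have "u i = 0" using Pu by (simp add: P_def)
      then show "u' i = 0" using w'1 by (simp add: u'_def)
    next
      have "(\<Sum>i\<in>UNIV. u' i *\<^sub>R row i A) = (\<Sum>i\<in>UNIV. u i *\<^sub>R row i A) - t *\<^sub>R (\<Sum>i\<in>UNIV. w' i *\<^sub>R row i A)"
        by (simp add: u'_def scaleR_diff_left sum_subtractf scaleR_sum_right)
      also have "\<dots> = - \<alpha>" using Pu w'2 by (simp add: P_def)
      finally show "(\<Sum>i\<in>UNIV. u' i *\<^sub>R row i A) = - \<alpha>" .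
    qed
    have "{i. u' i \<noteq> 0} \<subseteq> {i. u i \<noteq> 0} - {i0}"
    proof
      fix i assume "i \<in> {i. u' i \<noteq> 0}"
      then have ne: "u' i \<noteq> 0" by simp
      have "u i \<noteq> 0" using ne w'1 by (auto simp: u'_def)
      moreover have "i \<noteq> i0" using ne wi0 i0 by (auto simp: u'_def)
      ultimately show "i \<in> {i. u i \<noteq> 0} - {i0}" by simp
    qed
    then have "{i. u' i \<noteq> 0} \<subset> {i. u i \<noteq> 0}" using ui0 by blast
    then have "card {i. u' i \<noteq> 0} < card {i. u i \<noteq> 0}" by (intro psubset_card_mono) auto
    with umin[OF Pu'] show False by simp
  qed
  show ?thesis using Pu indep by (auto simp: P_def)
qed

theorem theorem4p3:
  fixes \<alpha> :: "real^'n" and S :: "(real^'n) set"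
    and A :: "real^'n^'m" and b :: "real^'m"
  assumes alpha_int: "\<forall>j. \<alpha> $ j \<in> \<int>"
    and A_int: "\<forall>i j. A $ i $ j \<in> \<int>"
    and S_convex: "convex S"
    and hull_eq: "convex hull (S \<inter> int_points) = {x. \<forall>i. (A *v x) $ i \<le> b $ i}"
    and P_nonempty: "{x. \<forall>i. (A *v x) $ i \<le> b $ i} \<noteq> {}"
    and rec: "rec_cone S = {x. \<forall>i. (A *v x) $ i \<le> 0}"
    and bdd: "bdd_below ((\<lambda>x. \<alpha> \<bullet> x) ` S)"
    and b'_finite: "\<forall>i. bdd_above ((\<lambda>x. row i A \<bullet> x) ` S)"
  shows "(INF x\<in>S \<inter> int_points. \<alpha> \<bullet> x) - (INF x\<in>S. \<alpha> \<bullet> x)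
         \<le> real CARD('n) * (\<Sum>j\<in>UNIV. \<bar>\<alpha> $ j\<bar>) * max_subdet A *
            (1 + (MAX i\<in>UNIV. \<bar>b $ i - (SUP x\<in>S. row i A \<bullet> x)\<bar>))"
proof -
  define Z where "Z = S \<inter> int_points"
  have hullZ: "convex hull Z = {x. \<forall>i. row i A \<bullet> x \<le> b $ i}"
    using hull_eq by (simp add: Z_def mv_row)
  have Zne: "Z \<noteq> {}" using hull_eq P_nonempty by (auto simp: Z_def)
  have ZS: "Z \<subseteq> S" by (simp add: Z_def)
  obtain Lb where Lb: "\<forall>x\<in>S. Lb \<le> \<alpha> \<bullet> x" using bdd by (auto simp: bdd_below_def)
  obtain z1 where z1: "z1 \<in> Z" using Zne by blast
  have intval: "\<alpha> \<bullet> z \<in> \<int>" if "z \<in> Z" for z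
    using that alpha_int int_inner_Ints by (auto simp: Z_def)
  obtain k1 where k1: "\<alpha> \<bullet> z1 = of_int k1" using intval[OF z1] Ints_cases by metis
  define V where "V = {k::int. k \<le> k1 \<and> (\<exists>z\<in>Z. \<alpha> \<bullet> z = of_int k)}"
  have "V \<subseteq> {\<lfloor>Lb\<rfloor>..k1}"
  proof
    fix k assume "k \<in> V"
    then obtain z where z: "z \<in> Z" "\<alpha> \<bullet> z = of_int k" "k \<le> k1" by (auto simp: V_def)
    have "z \<in> S" using z ZS by blast
    then have "Lb \<le> \<alpha> \<bullet> z" using Lb by blast
    then have "Lb \<le> of_int k" using z by simp
    then have "\<lfloor>Lb\<rfloor> \<le> k" by (metis floor_mono floor_of_int)
    then show "k \<in> {\<lfloor>Lb\<rfloor>..k1}" using z by simp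
  qed
  then have finV: "finite V" by (rule finite_subset) simp
  have k1V: "k1 \<in> V" using z1 k1 by (auto simp: V_def)
  define k0 where "k0 = Min V"
  have "k0 \<in> V" unfolding k0_def using finV k1V by (intro Min_in) auto
  then obtain z0 where z0: "z0 \<in> Z" "\<alpha> \<bullet> z0 = of_int k0" by (auto simp: V_def)
  have zminZ: "\<alpha> \<bullet> z0 \<le> \<alpha> \<bullet> z" if zZ: "z \<in> Z" for z
  proof -
    obtain k where k: "\<alpha> \<bullet> z = of_int k" using intval[OF zZ] Ints_cases by metis
    have "k0 \<le> k"
    proof (cases "k \<le> k1")
      case True
      then have "k \<in> V" using zZ k by (auto simp: V_def)
      then show ?thesis unfolding k0_def using finV by simp
    next
      case False
      have "k0 \<le> k1" unfolding k0_def using finV k1V by simp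
      then show ?thesis using False by simp
    qed
    then show ?thesis using k z0 by simp
  qed
  have zmin: "\<alpha> \<bullet> z0 \<le> \<alpha> \<bullet> y" if "\<forall>i. row i A \<bullet> y \<le> b $ i" for y
  proof -
    have "convex hull Z \<subseteq> {x. \<alpha> \<bullet> x \<ge> \<alpha> \<bullet> z0}"
      by (rule hull_minimal) (use zminZ convex_halfspace_ge in auto)
    then show ?thesis using that hullZ by auto
  qed
  have z0P: "\<forall>i. row i A \<bullet> z0 \<le> b $ i"
    using hull_inc[OF z0(1), of convex] hullZ by auto
  obtain u where u_nn: "\<forall>i. u i \<ge> 0" and u_supp: "\<forall>i. row i A \<bullet> z0 \<noteq> b $ i \<longrightarrow> u i = 0"
    and u_sum: "(\<Sum>i\<in>UNIV. u i *\<^sub>R row i A) = - \<alpha>"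
    and u_ind: "\<forall>w. (\<forall>i. u i = 0 \<longrightarrow> w i = 0) \<and> (\<Sum>i\<in>UNIV. w i *\<^sub>R row i A) = 0 \<longrightarrow> (\<forall>i. w i = 0)"
    using min_support[OF kkt[OF z0P zmin]] by blast
  define N where "N = real CARD('n) * (\<Sum>j\<in>UNIV. \<bar>\<alpha> $ j\<bar>) * max_subdet A"
  have uN: "(\<Sum>i\<in>UNIV. u i) \<le> N" unfolding N_def
    by (rule dual_bound[OF A_int u_nn u_sum]) (use u_ind in blast)
  have usum0: "0 \<le> (\<Sum>i\<in>UNIV. u i)" using u_nn by (simp add: sum_nonneg)
  define b' where "b' i = (SUP x\<in>S. row i A \<bullet> x)" for i
  have b'ub: "row i A \<bullet> x \<le> b' i" if "x \<in> S" for i x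
    unfolding b'_def using b'_finite that by (intro cSUP_upper) auto
  have alpha_eq: "\<alpha> = - (\<Sum>i\<in>UNIV. u i *\<^sub>R row i A)" using u_sum by simp
  have ax: "\<alpha> \<bullet> x = - (\<Sum>i\<in>UNIV. u i * (row i A \<bullet> x))" for x
    unfolding alpha_eq by (simp add: inner_sum_left)
  have az0: "\<alpha> \<bullet> z0 = - (\<Sum>i\<in>UNIV. u i * b $ i)"
    unfolding ax using u_supp by (intro arg_cong[of _ _ uminus] sum.cong refl) (metis mult_zero_left)
  have lowS: "- (\<Sum>i\<in>UNIV. u i * b' i) \<le> \<alpha> \<bullet> x" if "x \<in> S" for x
  proof -
    have "(\<Sum>i\<in>UNIV. u i * (row i A \<bullet> x)) \<le> (\<Sum>i\<in>UNIV. u i * b' i)"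
      using u_nn b'ub[OF that] by (intro sum_mono mult_left_mono) auto
    then show ?thesis unfolding ax by simp
  qed
  have bddZ: "bdd_below ((\<lambda>x. \<alpha> \<bullet> x) ` Z)" using Lb ZS by (auto simp: bdd_below_def)
  have infZ: "(INF x\<in>Z. \<alpha> \<bullet> x) \<le> \<alpha> \<bullet> z0" by (rule cINF_lower[OF bddZ z0(1)])
  have Sne: "S \<noteq> {}" using Zne ZS by blast
  have infS: "- (\<Sum>i\<in>UNIV. u i * b' i) \<le> (INF x\<in>S. \<alpha> \<bullet> x)"
    by (rule cINF_greatest[OF Sne lowS])
  define Mx where "Mx = (MAX i\<in>UNIV. \<bar>b $ i - b' i\<bar>)"
  have Mxge: "\<bar>b $ i - b' i\<bar> \<le> Mx" for i unfolding Mx_def by (intro Max_ge) auto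
  have Mx0: "0 \<le> Mx" using Mxge[of undefined] by linarith
  have "(INF x\<in>Z. \<alpha> \<bullet> x) - (INF x\<in>S. \<alpha> \<bullet> x) \<le> (\<Sum>i\<in>UNIV. u i * b' i) - (\<Sum>i\<in>UNIV. u i * b $ i)"
    using infZ infS az0 by linarith
  also have "\<dots> = (\<Sum>i\<in>UNIV. u i * (b' i - b $ i))" by (simp add: sum_subtractf right_diff_distrib)
  also have "\<dots> \<le> (\<Sum>i\<in>UNIV. u i * Mx)"
  proof (rule sum_mono)
    fix i
    have "b' i - b $ i \<le> Mx" using Mxge[of i] by linarith
    then show "u i * (b' i - b $ i) \<le> u i * Mx" using u_nn by (simp add: mult_left_mono)
  qed
  also have "\<dots> = (\<Sum>i\<in>UNIV. u i) * Mx" by (simp add: sum_distrib_right)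
  also have "\<dots> \<le> N * Mx" using uN Mx0 by (rule mult_right_mono)
  also have "\<dots> \<le> N * (1 + Mx)" using uN usum0 by (intro mult_left_mono) auto
  finally show ?thesis by (simp add: Z_def N_def Mx_def b'_def)
qed

end
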